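(* Let $\mu:\mathbb{R}^{n\times n}\to\mathbb{R}$ be the matrix measure induced by an orthant-monotonic norm on $\mathbb{R}^n$. Then for every $A\in\mathbb{R}^{n\times n}$ and every diagonal matrix $D\in\mathbb{R}^{n\times n}$ with diagonal entries $d_{11},\dots,d_{nn}$, \[\mu(A)-\max_i\{d_{ii}\}\le \mu(A-D)\le \mu(A)-\min_i\{d_{ii}\}.\]
   Context: For a vector norm $|\cdot|$ on $\mathbb{R}^n$, the induced matrix norm is $\|A\|=\max_{|x|=1}|Ax|$ and the induced matrix measure is $\mu(A)=\lim_{\varepsilon\to0^+}(\|I_n+\varepsilon A\|-1)/\varepsilon$. A norm $|\cdot|$ on $\mathbb{R}^n$ is orthant-monotonic if for all $x,y\in\mathbb{R}^n$: whenever $x_iy_i\ge 0$ and $|x_i|\le|y_i|$ for all $i$, then $|x|\le|y|$. *)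

theory Defs
  imports "HOL-Analysis.Analysis"
begin

definition is_vnorm :: "(real^'n \<Rightarrow> real) \<Rightarrow> bool" where
  "is_vnorm N \<longleftrightarrow>
     (\<forall>x. 0 \<le> N x) \<and> (\<forall>x. N x = 0 \<longleftrightarrow> x = 0) \<and>
     (\<forall>c x. N (c *s x) = \<bar>c\<bar> * N x) \<and> (\<forall>x y. N (x + y) \<le> N x + N y)"

definition orthant_monotonic :: "(real^'n \<Rightarrow> real) \<Rightarrow> bool" where
  "orthant_monotonic N \<longleftrightarrow>
     (\<forall>x y. (\<forall>i. 0 \<le> x$i * y$i \<and> \<bar>x$i\<bar> \<le> \<bar>y$i\<bar>) \<longrightarrow> N x \<le> N y)"

text \<open>Induced matrix norm: max over the unit sphere (the max is attained, so Sup = Max).\<close>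
definition induced_mnorm :: "(real^'n \<Rightarrow> real) \<Rightarrow> real^'n^'n \<Rightarrow> real" where
  "induced_mnorm N A = Sup {N (A *v x) | x. N x = 1}"

definition matrix_measure :: "(real^'n \<Rightarrow> real) \<Rightarrow> real^'n^'n \<Rightarrow> real" where
  "matrix_measure N A =
     Lim (at_right 0) (\<lambda>\<epsilon>::real. (induced_mnorm N (mat 1 + \<epsilon> *\<^sub>R A) - 1) / \<epsilon>)"

end

theory Submission
  imports Defs
begin

lemma vn_basic:
  assumes "is_vnorm N"
  shows "N 0 = 0" "N (-x) = N x" "N (c *\<^sub>R x) = \<bar>c\<bar> * N x" "N (x + y) \<le> N x + N y"
    "0 \<le> N x" "N x = 0 \<longleftrightarrow> x = 0"
proof -
  have sc: "\<And>c x. N (c *\<^sub>R x) = \<bar>c\<bar> * N x" using assms unfolding is_vnorm_def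
    by (metis scalar_mult_eq_scaleR)
  then show "N (c *\<^sub>R x) = \<bar>c\<bar> * N x" .
  have "N ((-1) *\<^sub>R x) = N x" using sc[of "-1" x] by simp
  then show "N (-x) = N x" by (metis scaleR_minus1_left)
  have z: "\<forall>x. N x = 0 \<longleftrightarrow> x = 0" using assms unfolding is_vnorm_def by blast
  then show "N 0 = 0" by (metis (full_types))
  show "N (x + y) \<le> N x + N y" "0 \<le> N x" "N x = 0 \<longleftrightarrow> x = 0"
    using assms unfolding is_vnorm_def by blast+
qed

lemma vn_sum:
  assumes "is_vnorm N" "finite S"
  shows "N (sum f S) \<le> (\<Sum>i\<in>S. N (f i))"
  using assms(2)
proof (induction S rule: finite_induct)
  case empty then show ?case using vn_basic(1)[OF assms(1)] by simp
next
  case (insert a S)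
  then show ?case using vn_basic(4)[OF assms(1), of "f a" "sum f S"] by simp
qed

lemma vn_coord:
  assumes "is_vnorm N" "orthant_monotonic N"
  shows "\<bar>x$i\<bar> * N (axis i 1) \<le> N x"
proof -
  have "N ((x$i) *\<^sub>R axis i 1) \<le> N x"
    using assms(2) unfolding orthant_monotonic_def
    by (erule_tac x="(x$i) *\<^sub>R axis i 1" in allE, erule_tac x=x in allE)
       (auto simp: axis_def)
  then show ?thesis using vn_basic(3)[OF assms(1)] by simp
qed

lemma vn_axis_pos:
  assumes "is_vnorm N"
  shows "0 < N (axis i (1::real))"
  using vn_basic(5,6)[OF assms, of "axis i 1"] by (auto simp: axis_eq_0_iff)

lemma vn_upper:
  assumes "is_vnorm N"
  shows "N y \<le> (\<Sum>i\<in>UNIV. \<bar>y$i\<bar> * N (axis i 1))"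
proof -
  have "N y = N (\<Sum>i\<in>UNIV. (y$i) *\<^sub>R axis i 1)"
    using basis_expansion[of y] by (simp add: scalar_mult_eq_scaleR)
  also have "\<dots> \<le> (\<Sum>i\<in>UNIV. N ((y$i) *\<^sub>R axis i 1))" by (rule vn_sum[OF assms]) simp
  also have "\<dots> = (\<Sum>i\<in>UNIV. \<bar>y$i\<bar> * N (axis i 1))"
    using vn_basic(3)[OF assms] by simp
  finally show ?thesis .
qed

lemma vn_bound:
  assumes "is_vnorm N" "orthant_monotonic N"
  shows "\<exists>K. \<forall>x. N (B *v x) \<le> K * N x"
proof -
  obtain K0 where K0: "K0 \<ge> 0" "\<And>x. norm (B *v x) \<le> K0 * norm x"
    using bounded_linear.nonneg_bounded[OF matrix_vector_mul_bounded_linear[of B]]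
    by (auto simp: mult.commute)
  define S where "S = (\<Sum>i\<in>UNIV. N (axis i (1::real)))"
  define T where "T = (\<Sum>j\<in>UNIV. 1 / N (axis j (1::real)))"
  have S0: "S \<ge> 0" unfolding S_def using vn_axis_pos[OF assms(1)] by (simp add: sum_nonneg less_imp_le)
  have "N (B *v x) \<le> (S * K0 * T) * N x" for x
  proof -
    have "N (B *v x) \<le> (\<Sum>i\<in>UNIV. \<bar>(B *v x)$i\<bar> * N (axis i 1))" by (rule vn_upper[OF assms(1)])
    also have "\<dots> \<le> (\<Sum>i\<in>UNIV. norm (B *v x) * N (axis i 1))"
      by (intro sum_mono mult_right_mono component_le_norm_cart)
         (use vn_axis_pos[OF assms(1)] in \<open>auto intro: less_imp_le\<close>)
    also have "\<dots> = S * norm (B *v x)" by (simp add: S_def sum_distrib_left mult.commute)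
    also have "\<dots> \<le> S * (K0 * norm x)" using K0 S0 by (simp add: mult_left_mono)
    also have "norm x \<le> (\<Sum>j\<in>UNIV. \<bar>x$j\<bar>)" by (rule norm_le_l1_cart)
    also have "\<dots> \<le> (\<Sum>j\<in>UNIV. N x / N (axis j 1))"
    proof (intro sum_mono)
      fix j show "\<bar>x$j\<bar> \<le> N x / N (axis j 1)"
        using vn_coord[OF assms, of x j] vn_axis_pos[OF assms(1), of j]
        by (simp add: pos_le_divide_eq)
    qed
    also have "\<dots> = T * N x" by (simp add: T_def sum_distrib_right)
    finally have "N (B *v x) \<le> S * (K0 * (T * N x))" using S0 K0 by (simp add: mult_left_mono)
    then show ?thesis by (simp add: mult_ac)
  qed
  then show ?thesis by blast
qed

lemma vn_unit:
  assumes "is_vnorm N"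
  shows "\<exists>x::real^'n. N x = 1"
proof -
  obtain i :: 'n where True by blast
  have p: "0 < N (axis i (1::real))" by (rule vn_axis_pos[OF assms])
  have "N ((1 / N (axis i 1)) *\<^sub>R axis i 1) = 1"
    using vn_basic(3)[OF assms] p by simp
  then show ?thesis by blast
qed

lemma nm_le_iff:
  assumes "is_vnorm N" "orthant_monotonic N"
  shows "induced_mnorm N B \<le> K \<longleftrightarrow> (\<forall>x. N (B *v x) \<le> K * N x)"
proof
  assume le: "\<forall>x. N (B *v x) \<le> K * N x"
  show "induced_mnorm N B \<le> K" unfolding induced_mnorm_def
  proof (rule cSup_least)
    show "{N (B *v x) |x. N x = 1} \<noteq> {}" using vn_unit[OF assms(1)] by auto
  next
    fix z assume "z \<in> {N (B *v x) |x. N x = 1}"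
    then obtain y where "z = N (B *v y)" "N y = 1" by auto
    then show "z \<le> K" using le[rule_format, of y] by simp
  qed
next
  assume le: "induced_mnorm N B \<le> K"
  obtain K1 where K1: "\<forall>x. N (B *v x) \<le> K1 * N x" using vn_bound[OF assms] by blast
  have bdd: "bdd_above {N (B *v x) |x. N x = 1}"
    using K1 by (auto intro!: bdd_aboveI[of _ K1] simp: eval_nat_numeral) (metis mult_1_right)
  show "\<forall>x. N (B *v x) \<le> K * N x"
  proof
    fix x
    show "N (B *v x) \<le> K * N x"
    proof (cases "x = 0")
      case True then show ?thesis using vn_basic(1)[OF assms(1)] by simp
    next
      case False
      then have p: "N x > 0" using vn_basic(5,6)[OF assms(1), of x] by auto
      define y where "y = (1 / N x) *\<^sub>R x"
      have y1: "N y = 1" unfolding y_def using vn_basic(3)[OF assms(1)] p by simp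
      have "N (B *v y) \<le> induced_mnorm N B" unfolding induced_mnorm_def
        using y1 by (intro cSup_upper[OF _ bdd]) blast
      moreover have "B *v y = (1 / N x) *\<^sub>R (B *v x)" unfolding y_def
        by (simp add: matrix_vector_mult_scaleR)
      ultimately have "N (B *v x) / N x \<le> K" using le vn_basic(3)[OF assms(1)] p by simp
      then show ?thesis using p by (simp add: divide_le_eq)
    qed
  qed
qed

lemma nm_apply:
  assumes "is_vnorm N" "orthant_monotonic N"
  shows "N (B *v x) \<le> induced_mnorm N B * N x"
  using nm_le_iff[OF assms, of B "induced_mnorm N B"] by simp

lemma nm_comb:
  assumes "is_vnorm N" "orthant_monotonic N" "0 \<le> a" "0 \<le> b"
  shows "induced_mnorm N (a *\<^sub>R B + b *\<^sub>R C) \<le> a * induced_mnorm N B + b * induced_mnorm N C"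
proof -
  have "N ((a *\<^sub>R B + b *\<^sub>R C) *v x) \<le> (a * induced_mnorm N B + b * induced_mnorm N C) * N x" for x
  proof -
    have "(a *\<^sub>R B + b *\<^sub>R C) *v x = a *\<^sub>R (B *v x) + b *\<^sub>R (C *v x)"
      by (simp add: matrix_vector_mult_add_rdistrib scaleR_matrix_vector_assoc)
    then have "N ((a *\<^sub>R B + b *\<^sub>R C) *v x) \<le> a * N (B *v x) + b * N (C *v x)"
      using vn_basic(3,4)[OF assms(1)] assms(3,4) by (metis abs_of_nonneg)
    also have "\<dots> \<le> a * (induced_mnorm N B * N x) + b * (induced_mnorm N C * N x)"
      using nm_apply[OF assms(1,2)] assms(3,4) by (intro add_mono mult_left_mono) auto
    finally show ?thesis by (simp add: algebra_simps)
  qed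
  then show ?thesis using nm_le_iff[OF assms(1,2)] by blast
qed

lemma nm_id:
  assumes "is_vnorm N" "orthant_monotonic N"
  shows "induced_mnorm N (mat 1) \<le> 1"
  using nm_le_iff[OF assms] by simp

definition mf :: "(real^'n \<Rightarrow> real) \<Rightarrow> real^'n^'n \<Rightarrow> real \<Rightarrow> real" where
  "mf N A e = (induced_mnorm N (mat 1 + e *\<^sub>R A) - 1) / e"

lemma mf_mono:
  assumes "is_vnorm N" "orthant_monotonic N" "0 < s" "s \<le> t"
  shows "mf N A s \<le> mf N A t"
proof -
  have t: "0 < t" using assms by simp
  have eq: "mat 1 + s *\<^sub>R A = (s/t) *\<^sub>R (mat 1 + t *\<^sub>R A) + (1 - s/t) *\<^sub>R mat 1"
    using t by (simp add: algebra_simps)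
  have "induced_mnorm N (mat 1 + s *\<^sub>R A)
      \<le> (s/t) * induced_mnorm N (mat 1 + t *\<^sub>R A) + (1 - s/t) * induced_mnorm N (mat 1)"
    unfolding eq using assms t by (intro nm_comb) auto
  also have "\<dots> \<le> (s/t) * induced_mnorm N (mat 1 + t *\<^sub>R A) + (1 - s/t) * 1"
    using nm_id[OF assms(1,2)] assms t by (intro add_left_mono mult_left_mono) auto
  finally have "induced_mnorm N (mat 1 + s *\<^sub>R A) - 1 \<le> s * ((induced_mnorm N (mat 1 + t *\<^sub>R A) - 1) / t)"
    by (simp add: algebra_simps diff_divide_distrib)
  then show ?thesis unfolding mf_def using assms(3) by (simp add: pos_divide_le_eq mult.commute)
qed

lemma mf_lower:
  fixes N :: "real^'n \<Rightarrow> real"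
  assumes "is_vnorm N" "orthant_monotonic N" "0 < e"
  shows "- induced_mnorm N A \<le> mf N A e"
proof -
  obtain x :: "real^'n" where x: "N x = 1" using vn_unit[OF assms(1)] by blast
  have "x = (mat 1 + e *\<^sub>R A) *v x + (- (e *\<^sub>R (A *v x)))"
    by (simp add: matrix_vector_mult_add_rdistrib scaleR_matrix_vector_assoc)
  then have "N x \<le> N ((mat 1 + e *\<^sub>R A) *v x) + N (- (e *\<^sub>R (A *v x)))"
    using vn_basic(4)[OF assms(1)] by metis
  also have "\<dots> = N ((mat 1 + e *\<^sub>R A) *v x) + e * N (A *v x)"
    using vn_basic(2,3)[OF assms(1)] assms(3) by simp
  also have "\<dots> \<le> induced_mnorm N (mat 1 + e *\<^sub>R A) + e * induced_mnorm N A"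
    using nm_apply[OF assms(1,2), of _ x] x assms(3) by (intro add_mono mult_left_mono) auto
  finally have "- e * induced_mnorm N A \<le> induced_mnorm N (mat 1 + e *\<^sub>R A) - 1" using x by simp
  then show ?thesis unfolding mf_def using assms(3) by (simp add: le_divide_eq mult.commute)
qed

lemma mm_eq:
  assumes "is_vnorm N" "orthant_monotonic N"
  shows "matrix_measure N A = Inf (mf N A ` {0<..})"
proof -
  let ?L = "Inf (mf N A ` {0<..})"
  have ne: "mf N A ` {0<..} \<noteq> {}" by auto
  have bdd: "bdd_below (mf N A ` {0<..})"
    using mf_lower[OF assms] by (auto intro!: bdd_belowI[of _ "- induced_mnorm N A"])
  have low: "?L \<le> mf N A e" if "0 < e" for e
    using that bdd by (intro cInf_lower) auto
  have "(mf N A \<longlongrightarrow> ?L) (at_right 0)"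
  proof (rule order_tendstoI)
    fix a assume "a < ?L"
    then show "eventually (\<lambda>e. a < mf N A e) (at_right 0)"
      using eventually_at_right_less[of "0::real"] low
      by (auto elim!: eventually_mono intro: less_le_trans)
  next
    fix a assume "?L < a"
    then obtain t where t: "0 < t" "mf N A t < a" using cInf_lessD[OF ne] by auto
    show "eventually (\<lambda>e. mf N A e < a) (at_right 0)"
      using eventually_at_right_real[OF t(1)]
    proof (rule eventually_mono)
      fix e assume "e \<in> {0<..<t}"
      then show "mf N A e < a" using mf_mono[OF assms, of e t A] t by auto
    qed
  qed
  moreover have "matrix_measure N A = Lim (at_right 0) (mf N A)"
    unfolding matrix_measure_def mf_def by simp
  ultimately show ?thesis by (simp add: tendsto_Lim)
qed

lemma mm_le:
  assumes "is_vnorm N" "orthant_monotonic N" "0 < e"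
  shows "matrix_measure N A \<le> mf N A e"
proof -
  have bdd: "bdd_below (mf N A ` {0<..})"
    using mf_lower[OF assms(1,2)] by (auto intro!: bdd_belowI[of _ "- induced_mnorm N A"])
  show ?thesis unfolding mm_eq[OF assms(1,2)] using assms(3) bdd by (intro cInf_lower) auto
qed

lemma diag_apply:
  assumes "\<forall>i j. i \<noteq> j \<longrightarrow> D$i$j = 0"
  shows "(mat 1 - c *\<^sub>R D) *v x = (\<chi> i. (1 - c * D$i$i) * x$i)"
proof -
  have "((mat 1 - c *\<^sub>R D) *v x)$i = (1 - c * D$i$i) * x$i" for i
  proof -
    have "((mat 1 - c *\<^sub>R D) *v x)$i = (\<Sum>j\<in>UNIV. ((mat 1 - c *\<^sub>R D)$i$j) * x$j)"
      by (simp add: matrix_vector_mult_def)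
    also have "\<dots> = (\<Sum>j\<in>UNIV. (if j = i then (1 - c * D$i$i) * x$i else 0))"
      using assms by (intro sum.cong) (auto simp: mat_def)
    also have "\<dots> = (1 - c * D$i$i) * x$i" by simp
    finally show ?thesis .
  qed
  then show ?thesis by (simp add: vec_eq_iff)
qed

lemma diag_nm:
  fixes N :: "real^'n \<Rightarrow> real" and D :: "real^'n^'n"
  assumes "is_vnorm N" "orthant_monotonic N" "\<forall>i j. i \<noteq> j \<longrightarrow> D$i$j = 0"
    "\<forall>i. m \<le> D$i$i" "\<forall>i. c * \<bar>D$i$i\<bar> \<le> 1" "0 \<le> c"
  shows "induced_mnorm N (mat 1 - c *\<^sub>R D) \<le> 1 - c * m"
proof -
  obtain i0 :: 'n where True by blast
  have lam: "0 \<le> 1 - c * D$i$i" "1 - c * D$i$i \<le> 1 - c * m" for i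
  proof -
    have "c * D$i$i \<le> c * \<bar>D$i$i\<bar>" using assms(6) by (simp add: mult_left_mono)
    then show "0 \<le> 1 - c * D$i$i" using assms(5) by (metis diff_ge_0_iff_ge order_trans)
    show "1 - c * D$i$i \<le> 1 - c * m" using assms(4,6) by (simp add: mult_left_mono)
  qed
  have pos: "0 \<le> 1 - c * m" using lam[of i0] by linarith
  have "N ((mat 1 - c *\<^sub>R D) *v x) \<le> (1 - c * m) * N x" for x
  proof -
    have "N (\<chi> i. (1 - c * D$i$i) * x$i) \<le> N ((1 - c * m) *\<^sub>R x)"
      using assms(2) unfolding orthant_monotonic_def
    proof (elim allE impE)
      show "\<forall>i. 0 \<le> (\<chi> i. (1 - c * D$i$i) * x$i)$i * ((1 - c * m) *\<^sub>R x)$i \<and>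
              \<bar>(\<chi> i. (1 - c * D$i$i) * x$i)$i\<bar> \<le> \<bar>((1 - c * m) *\<^sub>R x)$i\<bar>"
      proof
        fix i
        have a: "(\<chi> i. (1 - c * D$i$i) * x$i)$i * ((1 - c * m) *\<^sub>R x)$i
             = ((1 - c * D$i$i) * (1 - c * m)) * (x$i * x$i)" by (simp add: algebra_simps)
        have b: "\<bar>(\<chi> i. (1 - c * D$i$i) * x$i)$i\<bar> = (1 - c * D$i$i) * \<bar>x$i\<bar>"
          using lam(1)[of i] by (simp add: abs_mult)
        have c: "\<bar>((1 - c * m) *\<^sub>R x)$i\<bar> = (1 - c * m) * \<bar>x$i\<bar>"
          using pos by (simp add: abs_mult)
        show "0 \<le> (\<chi> i. (1 - c * D$i$i) * x$i)$i * ((1 - c * m) *\<^sub>R x)$i \<and>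
              \<bar>(\<chi> i. (1 - c * D$i$i) * x$i)$i\<bar> \<le> \<bar>((1 - c * m) *\<^sub>R x)$i\<bar>"
          unfolding a b c using lam[of i] pos
          by (auto intro!: mult_nonneg_nonneg mult_right_mono)
      qed
    qed
    then show ?thesis using diag_apply[OF assms(3)] vn_basic(3)[OF assms(1)] pos by simp
  qed
  then show ?thesis using nm_le_iff[OF assms(1,2)] by blast
qed

lemma main_ineq:
  assumes "is_vnorm N" "orthant_monotonic N" "\<forall>i j. i \<noteq> j \<longrightarrow> D$i$j = 0"
    "\<forall>i. m \<le> D$i$i"
  shows "matrix_measure N (A - D) \<le> matrix_measure N A - m"
proof -
  define R where "R = (\<Sum>i\<in>UNIV. \<bar>D$i$i\<bar>) + 1"
  have R: "0 < R" "\<And>i. \<bar>D$i$i\<bar> \<le> R"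
  proof -
    have m: "\<bar>D$i$i\<bar> \<le> (\<Sum>i\<in>UNIV. \<bar>D$i$i\<bar>)" for i
      by (rule member_le_sum) auto
    have "0 \<le> (\<Sum>i\<in>UNIV. \<bar>D$i$i\<bar>)" by (simp add: sum_nonneg)
    then show "0 < R" unfolding R_def by linarith
    fix i show "\<bar>D$i$i\<bar> \<le> R" using m[of i] unfolding R_def by linarith
  qed
  define \<delta> where "\<delta> = 1 / (2 * R)"
  have d0: "0 < \<delta>" unfolding \<delta>_def using R by simp
  have key: "mf N (A - D) e \<le> mf N A (2 * e) - m" if e: "0 < e" "e \<le> \<delta>" for e
  proof -
    have ce: "\<forall>i. (2 * e) * \<bar>D$i$i\<bar> \<le> 1"
    proof
      fix i
      have "(2 * e) * \<bar>D$i$i\<bar> \<le> (2 * \<delta>) * R"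
        using R(2)[of i] e by (intro mult_mono) auto
      also have "\<dots> = 1" unfolding \<delta>_def using R by simp
      finally show "(2 * e) * \<bar>D$i$i\<bar> \<le> 1" .
    qed
    have eq: "mat 1 + e *\<^sub>R (A - D) = (1/2) *\<^sub>R (mat 1 + (2 * e) *\<^sub>R A) + (1/2) *\<^sub>R (mat 1 - (2 * e) *\<^sub>R D)"
      by (simp add: vec_eq_iff mat_def algebra_simps)
    have "induced_mnorm N (mat 1 + e *\<^sub>R (A - D))
        \<le> (1/2) * induced_mnorm N (mat 1 + (2 * e) *\<^sub>R A) + (1/2) * induced_mnorm N (mat 1 - (2 * e) *\<^sub>R D)"
      unfolding eq by (intro nm_comb[OF assms(1,2)]) auto
    also have "\<dots> \<le> (1/2) * induced_mnorm N (mat 1 + (2 * e) *\<^sub>R A) + (1/2) * (1 - (2 * e) * m)"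
      using diag_nm[OF assms(1-4) ce] e by simp
    finally have f: "induced_mnorm N (mat 1 + e *\<^sub>R (A - D))
        \<le> (1/2) * induced_mnorm N (mat 1 + (2 * e) *\<^sub>R A) + (1/2) * (1 - (2 * e) * m)" .
    have E: "e * ((induced_mnorm N (mat 1 + (2 * e) *\<^sub>R A) - 1) / (2 * e) - m)
        = (induced_mnorm N (mat 1 + (2 * e) *\<^sub>R A) - 1) / 2 - e * m"
      using e by (simp add: field_simps)
    have "induced_mnorm N (mat 1 + e *\<^sub>R (A - D)) - 1
        \<le> e * ((induced_mnorm N (mat 1 + (2 * e) *\<^sub>R A) - 1) / (2 * e) - m)"
    proof -
      have g: "\<And>a b::real. a \<le> (1/2) * b + (1/2) * (1 - (2 * e) * m) \<Longrightarrow> a - 1 \<le> (b - 1) / 2 - e * m"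
        by (simp add: algebra_simps)
      show ?thesis unfolding E by (rule g[OF f])
    qed
    then show ?thesis unfolding mf_def using e by (simp add: pos_divide_le_eq mult.commute)
  qed
  have "matrix_measure N (A - D) + m \<le> mf N A t" if t: "0 < t" for t
  proof -
    define e where "e = min \<delta> (t/2)"
    have e: "0 < e" "e \<le> \<delta>" "2 * e \<le> t" unfolding e_def using d0 t by auto
    have "matrix_measure N (A - D) \<le> mf N (A - D) e" by (rule mm_le[OF assms(1,2) e(1)])
    also have "\<dots> \<le> mf N A (2 * e) - m" by (rule key[OF e(1,2)])
    also have "\<dots> \<le> mf N A t - m" using mf_mono[OF assms(1,2), of "2*e" t A] e by simp
    finally show ?thesis by simp
  qed
  then have "matrix_measure N (A - D) + m \<le> Inf (mf N A ` {0<..})"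
    by (intro cInf_greatest) auto
  then show ?thesis unfolding mm_eq[OF assms(1,2)] by simp
qed

theorem proposition1:
  fixes N :: "real^'n \<Rightarrow> real" and A D :: "real^'n^'n"
  assumes "is_vnorm N" and "orthant_monotonic N"
    and "\<forall>i j. i \<noteq> j \<longrightarrow> D$i$j = 0"
  shows "matrix_measure N A - Max (range (\<lambda>i. D$i$i)) \<le> matrix_measure N (A - D)
       \<and> matrix_measure N (A - D) \<le> matrix_measure N A - Min (range (\<lambda>i. D$i$i))"
proof
  show "matrix_measure N (A - D) \<le> matrix_measure N A - Min (range (\<lambda>i. D$i$i))"
    by (rule main_ineq[OF assms]) auto
  have d': "\<forall>i j. i \<noteq> j \<longrightarrow> (-D)$i$j = 0" using assms(3) by simp
  define M where "M = Max (range (\<lambda>i. D$i$i))"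
  have "\<forall>i. - M \<le> (-D)$i$i" unfolding M_def by auto
  from main_ineq[OF assms(1,2) d' this, of "A - D"]
  have "matrix_measure N (A - D - (- D)) \<le> matrix_measure N (A - D) - (- M)" .
  moreover have "A - D - (- D) = A" by simp
  ultimately show "matrix_measure N A - Max (range (\<lambda>i. D$i$i)) \<le> matrix_measure N (A - D)"
    unfolding M_def[symmetric] by simp
qed

end
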